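(* Let $\hat{\mathbb S}^2$ denote $\mathbb S^2$ with the antipodal involution $k\mapsto -k$, let $U(2)$ carry the involution $\mu(U)=-Q\bar UQ$ with $Q=\begin{pmatrix}0&-1\\1&0\end{pmatrix}$, and $U(1)$ the involution $z\mapsto\bar z$. Then the determinant $\det:U(2)\to U(1)$ induces a group isomorphism $$\det:[\hat{\mathbb S}^2,U(2)]_{\mathbb Z_2}\longrightarrow[\hat{\mathbb S}^2,U(1)]_{\mathbb Z_2}\cong\mathbb Z_2,$$ where the latter group is generated by the classes of the constant maps $\pm1$.
   Context: For involutive spaces $(A,\alpha)$, $(B,\beta)$, $[A,B]_{\mathbb Z_2}$ denotes the set of equivariant maps $f:A\to B$ ($f\circ\alpha=\beta\circ f$) modulo homotopy through equivariant maps; when $B$ is a group with involution acting by group automorphisms, it is a group under pointwise multiplication. *)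

theory Defs
  imports "HOL-Analysis.Analysis"
begin

definition S2 :: "(real^3) set" where "S2 = sphere 0 1"
definition antip :: "real^3 \<Rightarrow> real^3" where "antip k = - k"

definition mconj :: "complex^2^2 \<Rightarrow> complex^2^2" where
  "mconj U = (\<chi> i j. cnj (U $ i $ j))"
definition adj :: "complex^2^2 \<Rightarrow> complex^2^2" where
  "adj U = transpose (mconj U)"

definition U2 :: "(complex^2^2) set" where
  "U2 = {U. U ** adj U = mat 1 \<and> adj U ** U = mat 1}"
definition U1 :: "complex set" where "U1 = {z. cmod z = 1}"

definition Qm :: "complex^2^2" where
  "Qm = vector [vector [0, -1], vector [1, 0]]"

definition mu :: "complex^2^2 \<Rightarrow> complex^2^2" where
  "mu U = - (Qm ** mconj U ** Qm)"

definition EqMaps :: "'a::topological_space set \<Rightarrow> ('a \<Rightarrow> 'a) \<Rightarrow> 'b::topological_space set \<Rightarrow> ('b \<Rightarrow> 'b) \<Rightarrow> ('a \<Rightarrow> 'b) set" where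
  "EqMaps A a B b = {f. continuous_on A f \<and> f ` A \<subseteq> B \<and> (\<forall>x\<in>A. f (a x) = b (f x))}"

definition eq_htpc :: "'a::topological_space set \<Rightarrow> ('a \<Rightarrow> 'a) \<Rightarrow> 'b::topological_space set \<Rightarrow> ('b \<Rightarrow> 'b) \<Rightarrow> ('a \<Rightarrow> 'b) \<Rightarrow> ('a \<Rightarrow> 'b) \<Rightarrow> bool" where
  "eq_htpc A a B b f g \<longleftrightarrow> homotopic_with_canon (\<lambda>h. \<forall>x\<in>A. h (a x) = b (h x)) A B f g"

end

theory Submission
  imports Defs
begin


lemma htp_canon_iff:
  assumes "\<And>h k. (\<And>x. x \<in> S \<Longrightarrow> h x = k x) \<Longrightarrow> P h \<longleftrightarrow> P k"
  shows "homotopic_with_canon P S T f g \<longleftrightarrow> (\<exists>H. continuous_on ({0..1::real} \<times> S) H \<and> H ` ({0..1::real} \<times> S) \<subseteq> T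
     \<and> (\<forall>x\<in>S. H(0,x) = f x) \<and> (\<forall>x\<in>S. H(1,x) = g x) \<and> (\<forall>t\<in>{0..1::real}. P (\<lambda>x. H(t,x))))"
proof -
  have "homotopic_with_canon P S T f g \<longleftrightarrow> (\<exists>h. continuous_map (prod_topology (subtopology euclideanreal {0..1}) (top_of_set S)) (top_of_set T) h \<and>
              (\<forall>x \<in> topspace (top_of_set S). h(0,x) = f x) \<and>
              (\<forall>x \<in> topspace (top_of_set S). h(1,x) = g x) \<and>
              (\<forall>t \<in> {0..1}. P(\<lambda>x. h(t, x))))"
    by (rule homotopic_with, rule assms, auto)
  then show ?thesis
    by (simp add: continuous_map_subtopology_eu image_subset_iff_funcset)
qed

lemma antip_S2: "x \<in> S2 \<Longrightarrow> antip x \<in> S2"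
  by (simp add: S2_def antip_def)

lemma antip_antip[simp]: "antip (antip x) = x"
  by (simp add: antip_def)

lemma cont_antip: "continuous_on A antip"
  unfolding antip_def by (intro continuous_intros)

lemma cont_antip_comp[continuous_intros]: "continuous_on A f \<Longrightarrow> continuous_on A (\<lambda>x. antip (f x))"
  unfolding antip_def by (intro continuous_intros)

lemma eq_htpc_iff:
  assumes "\<And>x. x \<in> S2 \<Longrightarrow> antip x \<in> S2"
  shows "eq_htpc S2 antip B b f g \<longleftrightarrow> (\<exists>H. continuous_on ({0..1::real} \<times> S2) H \<and> H ` ({0..1::real} \<times> S2) \<subseteq> B
     \<and> (\<forall>x\<in>S2. H(0,x) = f x) \<and> (\<forall>x\<in>S2. H(1,x) = g x) \<and> (\<forall>t\<in>{0..1::real}. \<forall>x\<in>S2. H(t, antip x) = b (H(t,x))))"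
  unfolding eq_htpc_def
  by (subst htp_canon_iff) (auto simp: assms)

lemmas eq_htpc_iff' = eq_htpc_iff[OF antip_S2]

lemma S2_nonempty: "S2 \<noteq> {}"
  by (simp add: S2_def)

lemma connected_S2: "connected S2"
  by (simp add: S2_def connected_sphere)

lemma int_const:
  fixes f :: "'a::topological_space \<Rightarrow> real"
  assumes "connected S" "continuous_on S f" "\<And>x. x \<in> S \<Longrightarrow> f x \<in> \<int>" "x \<in> S" "y \<in> S"
  shows "f x = f y"
proof -
  have "f constant_on S"
  proof (rule continuous_discrete_range_constant[OF assms(1,2)])
    fix x assume x: "x \<in> S"
    show "\<exists>e>0. \<forall>y. y \<in> S \<and> f y \<noteq> f x \<longrightarrow> e \<le> norm (f y - f x)"
    proof (intro exI[of _ 1] conjI allI impI)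
      fix y assume y: "y \<in> S \<and> f y \<noteq> f x"
      then have "f y - f x \<in> \<int>" "f y - f x \<noteq> 0" using assms(3) x by auto
      then show "1 \<le> norm (f y - f x)"
        by (metis Ints_cases Ints_nonzero_abs_ge1 real_norm_def)
    qed simp
  qed
  then show ?thesis using assms(4,5) by (auto simp: constant_on_def)
qed

lemma lift_gen:
  fixes S :: "'a::real_normed_vector set"
  assumes B: "Borsukian S" and "continuous_on S h" "h ` S \<subseteq> U1"
  obtains \<theta> where "continuous_on S \<theta>" "\<And>x. x \<in> S \<Longrightarrow> h x = exp(\<i> * of_real (\<theta> x))"
proof -
  have "h \<in> S \<rightarrow> sphere 0 1" using assms(3) by (auto simp: U1_def)
  moreover have "\<forall>f. continuous_on S f \<and> f \<in> S \<rightarrow> sphere (0::complex) 1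
              \<longrightarrow> (\<exists>g. continuous_on S (complex_of_real \<circ> g) \<and> (\<forall>x \<in> S. f x = exp(\<i> * of_real(g x))))"
    using Borsukian_continuous_logarithm_circle_real[THEN iffD1, OF B] .
  ultimately obtain g where g: "continuous_on S (complex_of_real \<circ> g)" "\<forall>x\<in>S. h x = exp(\<i> * of_real (g x))"
     using assms(2) by blast
  have "continuous_on S (\<lambda>x. Re ((complex_of_real \<circ> g) x))"
    by (intro continuous_intros g)
  then have "continuous_on S g" by simp
  then show ?thesis using g that by blast
qed

lemma Borsukian_S2: "Borsukian S2"
  unfolding S2_def by (rule Borsukian_sphere) simp

lemma exp_real_U1: "exp (\<i> * of_real r) \<in> U1"
  by (simp add: U1_def)

lemma cnj_exp_real: "cnj (exp (\<i> * of_real r)) = exp (- (\<i> * of_real r))"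
  by (simp add: exp_cnj)

lemma E1_sum:
  assumes "h \<in> EqMaps S2 antip U1 cnj"
  obtains \<theta> and n :: int where "continuous_on S2 \<theta>" "\<And>x. x \<in> S2 \<Longrightarrow> h x = exp(\<i> * of_real (\<theta> x))"
    "\<And>x. x \<in> S2 \<Longrightarrow> \<theta> (antip x) + \<theta> x = 2 * pi * n"
proof -
  have h: "continuous_on S2 h" "h ` S2 \<subseteq> U1" "\<And>x. x \<in> S2 \<Longrightarrow> h (antip x) = cnj (h x)"
    using assms by (auto simp: EqMaps_def)
  obtain \<theta> where th: "continuous_on S2 \<theta>" "\<And>x. x \<in> S2 \<Longrightarrow> h x = exp(\<i> * of_real (\<theta> x))"
    using lift_gen[OF Borsukian_S2 h(1,2)] by blast
  define s where "s x = (\<theta> (antip x) + \<theta> x) / (2*pi)" for x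
  have sint: "s x \<in> \<int>" if x: "x \<in> S2" for x
  proof -
    have "exp(\<i> * of_real (\<theta> (antip x))) = exp (- (\<i> * of_real (\<theta> x)))"
      using h(3)[OF x] th(2)[OF x] th(2)[OF antip_S2[OF x]] by (simp add: exp_cnj)
    then have "exp(\<i> * of_real (\<theta> (antip x)) + \<i> * of_real (\<theta> x)) = 1"
      by (simp add: exp_add exp_minus)
    then obtain m :: int where "\<theta> (antip x) + \<theta> x = 2 * m * pi"
      by (auto simp: exp_eq_1 algebra_simps)
    then have "s x = m" by (simp add: s_def)
    then show ?thesis by simp
  qed
  have cs: "continuous_on S2 s"
  proof -
    have "continuous_on S2 (\<theta> \<circ> antip)"
      by (rule continuous_on_compose[OF cont_antip]) (metis th(1) antip_S2 continuous_on_subset image_subsetI)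
    then show ?thesis unfolding s_def using th(1)
      by (intro continuous_intros) (auto simp: o_def)
  qed
  obtain x0 where x0: "x0 \<in> S2" using S2_nonempty by blast
  obtain n :: int where n: "s x0 = n" using sint[OF x0] Ints_cases by blast
  have "\<theta> (antip x) + \<theta> x = 2 * pi * n" if "x \<in> S2" for x
  proof -
    have "s x = n" using int_const[OF connected_S2 cs sint that x0] n by simp
    then show ?thesis by (simp add: s_def field_simps)
  qed
  then show ?thesis using that th by blast
qed

lemma E1_htp_n:
  fixes n :: int
  assumes th: "continuous_on S2 \<theta>" "\<And>x. x \<in> S2 \<Longrightarrow> h x = exp(\<i> * of_real (\<theta> x))"
    "\<And>x. x \<in> S2 \<Longrightarrow> \<theta> (antip x) + \<theta> x = 2 * pi * n"
  shows "eq_htpc S2 antip U1 cnj h (\<lambda>k. exp(\<i> * of_real (pi * n)))"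
proof -
  define H where "H z = exp(\<i> * of_real ((1 - fst z) * \<theta> (snd z) + fst z * pi * n))" for z
  have c1: "continuous_on ({0..1::real} \<times> S2) (\<lambda>z. \<theta> (snd z))"
    by (rule continuous_on_compose2[OF th(1) continuous_on_snd]) auto
  have "continuous_on ({0..1} \<times> S2) H"
    unfolding H_def by (intro continuous_intros c1)
  moreover have "H ` ({0..1} \<times> S2) \<subseteq> U1"
    unfolding H_def using exp_real_U1 by blast
  moreover have "\<forall>t\<in>{0..1::real}. \<forall>x\<in>S2. H(t, antip x) = cnj (H(t,x))"
  proof (intro ballI)
    fix t :: real and x assume x: "x \<in> S2"
    have e: "(1 - t) * \<theta> (antip x) + t * pi * n = - ((1 - t) * \<theta> x + t * pi * n) + 2 * n * pi"
    proof -
      have t3: "\<theta> (antip x) = 2*pi*n - \<theta> x" using th(3)[OF x] by linarith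
      show ?thesis by (simp add: t3 algebra_simps)
    qed
    have "H(t, antip x) = exp(\<i> * of_real (- ((1 - t) * \<theta> x + t * pi * n) + 2 * n * pi))"
      unfolding H_def fst_conv snd_conv e ..
    also have "\<dots> = exp (- (\<i> * of_real ((1 - t) * \<theta> x + t * pi * n)) + (2 * of_int n * pi) * \<i>)"
      by (rule arg_cong[where f=exp]) (simp add: algebra_simps)
    also have "\<dots> = exp (- (\<i> * of_real ((1 - t) * \<theta> x + t * pi * n)))"
      using exp_integer_2pi[of "of_int n"] by (simp only: exp_add Ints_of_int mult_1_right simp_thms)
    also have "\<dots> = cnj (H(t,x))"
      unfolding H_def by (simp add: exp_cnj)
    finally show "H(t, antip x) = cnj (H(t,x))" .
  qed
  moreover have "\<forall>x\<in>S2. H(0,x) = h x" "\<forall>x\<in>S2. H(1,x) = exp(\<i> * of_real (pi * n))"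
    using th(2) by (simp_all add: H_def mult.commute)
  ultimately have "\<exists>H. continuous_on ({0..1::real} \<times> S2) H \<and> H ` ({0..1::real} \<times> S2) \<subseteq> U1
     \<and> (\<forall>x\<in>S2. H(0,x) = h x) \<and> (\<forall>x\<in>S2. H(1,x) = exp(\<i> * of_real (pi * n))) \<and> (\<forall>t\<in>{0..1::real}. \<forall>x\<in>S2. H(t, antip x) = cnj (H(t,x)))"
    by blast
  then have "eq_htpc S2 antip U1 cnj h (\<lambda>k. exp(\<i> * of_real (pi * n)))"
    by (subst eq_htpc_iff')
  then show ?thesis by blast
qed

lemma E1_htp:
  assumes "h \<in> EqMaps S2 antip U1 cnj"
  shows "\<exists>n::int. eq_htpc S2 antip U1 cnj h (\<lambda>k. exp(\<i> * of_real (pi * n)))"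
  using E1_sum[OF assms] E1_htp_n by metis

lemma exp_pi_int: "exp (\<i> * of_real (pi * of_int n)) = (if even n then 1 else -1)"
proof (cases "even n")
  case True
  then obtain m where m: "n = 2*m" by blast
  have "exp (\<i> * of_real (pi * of_int n)) = exp((2 * of_int m * pi) * \<i>)"
    by (rule arg_cong[where f=exp]) (simp add: m)
  also have "\<dots> = 1" by (rule exp_integer_2pi) simp
  finally show ?thesis using True by simp
next
  case False
  then obtain m where m: "n = 2*m+1" by (metis oddE)
  have "exp (\<i> * of_real (pi * of_int n)) = exp(((2 * of_int m + 1) * pi) * \<i>)"
    by (rule arg_cong[where f=exp]) (simp add: m algebra_simps)
  also have "\<dots> = -1" by (rule exp_integer_2pi_plus1) simp
  finally show ?thesis using False by simp
qed

lemma P8: "h \<in> EqMaps S2 antip U1 cnj \<Longrightarrow> eq_htpc S2 antip U1 cnj h (\<lambda>k. 1) \<or> eq_htpc S2 antip U1 cnj h (\<lambda>k. -1)"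
  using E1_htp[of h] unfolding exp_pi_int by (metis (full_types))

lemma exp_eq_m1: "exp (\<i> * of_real r) = -1 \<Longrightarrow> \<exists>m::int. r = 2 * m * pi + pi"
proof -
  assume a: "exp (\<i> * of_real r) = -1"
  have "exp (\<i> * of_real (r - pi)) = exp (\<i> * of_real r) * exp (- (\<i> * of_real pi))"
    by (simp add: exp_add[symmetric] algebra_simps)
  also have "\<dots> = 1" using a by (simp add: exp_minus)
  finally obtain m :: int where "r - pi = 2 * m * pi" by (auto simp: exp_eq_1)
  then show ?thesis by (intro exI[of _ m]) linarith
qed

lemma P9: "\<not> eq_htpc S2 antip U1 cnj (\<lambda>k. 1) (\<lambda>k. -1)"
proof
  assume "eq_htpc S2 antip U1 cnj (\<lambda>k. 1) (\<lambda>k. -1)"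
  then have "\<exists>H. continuous_on ({0..1::real} \<times> S2) H \<and> H ` ({0..1::real} \<times> S2) \<subseteq> U1
     \<and> (\<forall>x\<in>S2. H(0,x) = 1) \<and> (\<forall>x\<in>S2. H(1,x) = -1) \<and> (\<forall>t\<in>{0..1::real}. \<forall>x\<in>S2. H(t, antip x) = cnj (H(t,x)))"
    by (subst (asm) eq_htpc_iff')
  then obtain H where H: "continuous_on ({0..1::real} \<times> S2) H" "H ` ({0..1::real} \<times> S2) \<subseteq> U1"
     "\<forall>x\<in>S2. H(0,x) = 1" "\<forall>x\<in>S2. H(1,x) = -1" "\<forall>t\<in>{0..1::real}. \<forall>x\<in>S2. H(t, antip x) = cnj (H(t,x))"
    by blast
  define T where "T = {0..1::real} \<times> S2"
  have sc: "simply_connected T" unfolding T_def S2_def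
    by (intro simply_connected_Times convex_imp_simply_connected simply_connected_sphere) auto
  have lpc: "locally path_connected T" unfolding T_def S2_def
    by (rule locally_Times[where R=path_connected, OF convex_imp_locally_path_connected ENR_imp_locally_path_connected[OF ENR_sphere]])
       (auto intro: path_connected_Times)
  have "Borsukian T" by (rule simply_connected_imp_Borsukian[OF sc lpc])
  then obtain \<theta> where th: "continuous_on T \<theta>" "\<And>z. z \<in> T \<Longrightarrow> H z = exp(\<i> * of_real (\<theta> z))"
    using lift_gen[of T H] H(1,2) unfolding T_def by blast
  have cT: "connected T" unfolding T_def
    by (intro connected_Times connected_S2) auto
  define a where "a k = \<theta> (0,k) / (2*pi)" for k
  define b where "b k = (\<theta> (1,k) / pi - 1) / 2" for k
  define s where "s z = (\<theta> (fst z, antip (snd z)) + \<theta> z) / (2*pi)" for z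
  have aint: "a k \<in> \<int>" if "k \<in> S2" for k
  proof -
    have "exp(\<i> * of_real (\<theta> (0,k))) = 1" using th(2)[of "(0,k)"] H(3) that by (auto simp: T_def)
    then obtain m :: int where "\<theta> (0,k) = 2 * m * pi" by (auto simp: exp_eq_1)
    then show ?thesis by (simp add: a_def)
  qed
  have bint: "b k \<in> \<int>" if "k \<in> S2" for k
  proof -
    have "exp(\<i> * of_real (\<theta> (1,k))) = -1" using th(2)[of "(1,k)"] H(4) that by (auto simp: T_def)
    then obtain m :: int where "\<theta> (1,k) = 2 * real_of_int m * pi + pi" using exp_eq_m1 by blast
    then have "b k = m" by (simp add: b_def field_simps)
    then show ?thesis by simp
  qed
  have sint: "s z \<in> \<int>" if z: "z \<in> T" for z
  proof -
    obtain t x where tx: "z = (t,x)" "t \<in> {0..1}" "x \<in> S2" using z unfolding T_def by blast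
    have "exp(\<i> * of_real (\<theta> (t, antip x))) = exp (- (\<i> * of_real (\<theta> (t,x))))"
      using H(5) tx th(2)[of "(t,x)"] th(2)[of "(t,antip x)"] antip_S2[of x]
      by (simp add: T_def exp_cnj)
    then have "exp(\<i> * of_real (\<theta> (t, antip x)) + \<i> * of_real (\<theta> (t,x))) = 1"
      by (simp add: exp_add exp_minus)
    then obtain m :: int where "\<theta> (t, antip x) + \<theta> (t,x) = 2 * m * pi"
      by (auto simp: exp_eq_1 algebra_simps)
    then have "s z = m" by (simp add: s_def tx)
    then show ?thesis by simp
  qed
  have c0: "continuous_on S2 (\<lambda>k. \<theta> (0,k))"
    by (rule continuous_on_compose2[OF th(1)]) (auto intro!: continuous_intros simp: T_def)
  have c1: "continuous_on S2 (\<lambda>k. \<theta> (1,k))"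
    by (rule continuous_on_compose2[OF th(1)]) (auto intro!: continuous_intros simp: T_def)
  have ca: "continuous_on S2 a" unfolding a_def by (intro continuous_intros c0) simp
  have cb: "continuous_on S2 b" unfolding b_def by (intro continuous_intros c1) auto
  have cs1: "continuous_on T (\<lambda>z. \<theta> (fst z, antip (snd z)))"
    by (rule continuous_on_compose2[OF th(1)]) (auto intro!: continuous_intros cont_antip simp: T_def antip_S2)
  have cs: "continuous_on T s" unfolding s_def by (intro continuous_intros cs1 th(1)) simp
  obtain k where k: "k \<in> S2" using S2_nonempty by blast
  have ak: "\<theta> (0, antip k) = \<theta> (0, k)"
    using int_const[OF connected_S2 ca aint antip_S2[OF k] k] by (simp add: a_def)
  have bk: "\<theta> (1, antip k) = \<theta> (1, k)"
    using int_const[OF connected_S2 cb bint antip_S2[OF k] k] by (simp add: b_def)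
  have "s (0,k) = s (1,k)"
    using int_const[OF cT cs sint] k by (simp add: T_def)
  then have "2 * a k = 2 * b k + 1"
    using ak bk by (simp add: s_def a_def b_def field_simps)
  moreover obtain ia ib :: int where "a k = ia" "b k = ib" using aint[OF k] bint[OF k] Ints_cases by metis
  ultimately have "2 * ia = 2 * ib + 1" by linarith
  then show False by presburger
qed



lemma notsurj:
  fixes n :: "real^3 \<Rightarrow> complex \<times> complex"
  assumes diff: "n differentiable_on S2" and nS: "n ` S2 \<subseteq> sphere 0 1"
  shows "\<exists>c. c \<in> sphere 0 1 \<and> c \<notin> n ` S2"
proof (rule ccontr)
  assume "\<not> (\<exists>c. c \<in> sphere 0 1 \<and> c \<notin> n ` S2)"
  then have eq: "sphere 0 1 \<subseteq> n ` S2" by blast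
  have sub: "(\<lambda>x. x /\<^sub>R norm x) ` (UNIV - {0}) \<subseteq> S2"
    unfolding S2_def image_subset_iff by (simp add: norm_divide)
  have diff': "n differentiable_on (\<lambda>x. x /\<^sub>R norm x) ` (UNIV - {0::real^3})"
    by (rule differentiable_on_subset[OF diff sub])
  define g where "g x = norm x *\<^sub>R n (inverse (norm x) *\<^sub>R x)" for x :: "real^3"
  have gdiff: "g differentiable_on UNIV - {0}"
    unfolding g_def
    by (rule diff' derivative_intros differentiable_on_compose [where f=n] | force)+
  have neg: "negligible (g ` (UNIV - {0}))"
    by (rule negligible_differentiable_image_lowdim[OF _ gdiff]) simp
  have "UNIV - {0} \<subseteq> g ` (UNIV - {0})"
  proof
    fix y :: "complex \<times> complex" assume "y \<in> UNIV - {0}"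
    then have y0: "y \<noteq> 0" by simp
    then have "y /\<^sub>R norm y \<in> sphere 0 1" by (simp add: norm_divide)
    then have "y /\<^sub>R norm y \<in> n ` S2" using eq by (rule subsetD[rotated])
    then obtain u where u: "u \<in> S2" "y /\<^sub>R norm y = n u" by (rule imageE)
    have nu: "norm u = 1" using u(1) by (simp add: S2_def)
    define x where "x = norm y *\<^sub>R u"
    have nx: "norm x = norm y" using nu by (simp add: x_def)
    have x0: "x \<noteq> 0" using nx y0 by auto
    have "inverse (norm x) *\<^sub>R x = u" using nx y0 by (simp add: x_def)
    then have "g x = y" using u(2)[symmetric] nx y0 by (simp add: g_def)
    then show "y \<in> g ` (UNIV - {0})" using x0 by blast
  qed
  then have "negligible (UNIV - {0::complex \<times> complex})" using neg negligible_subset by blast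
  then have "negligible (insert 0 (UNIV - {0::complex \<times> complex}))" by (simp only: negligible_insert)
  moreover have "insert 0 (UNIV - {0}) = (UNIV :: (complex \<times> complex) set)" by auto
  ultimately show False by simp
qed

definition Ev :: "(real^3 \<Rightarrow> complex \<times> complex) \<Rightarrow> bool" where
  "Ev h \<longleftrightarrow> (\<forall>x\<in>S2. h (antip x) = h x)"

lemma Ev_iff: "homotopic_with_canon Ev S2 T f g \<longleftrightarrow> (\<exists>H. continuous_on ({0..1::real} \<times> S2) H \<and> H ` ({0..1::real} \<times> S2) \<subseteq> T
     \<and> (\<forall>x\<in>S2. H(0,x) = f x) \<and> (\<forall>x\<in>S2. H(1,x) = g x) \<and> (\<forall>t\<in>{0..1::real}. \<forall>x\<in>S2. H(t, antip x) = H(t,x)))"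
  by (subst htp_canon_iff) (auto simp: Ev_def antip_S2)

lemma Ev_I:
  assumes "continuous_on ({0..1::real} \<times> S2) H" "H ` ({0..1::real} \<times> S2) \<subseteq> T"
     "\<forall>x\<in>S2. H(0,x) = f x" "\<forall>x\<in>S2. H(1,x) = g x" "\<forall>t\<in>{0..1::real}. \<forall>x\<in>S2. H(t, antip x) = H(t,x)"
  shows "homotopic_with_canon Ev S2 T f g"
proof -
  have "\<exists>H. continuous_on ({0..1::real} \<times> S2) H \<and> H ` ({0..1::real} \<times> S2) \<subseteq> T
     \<and> (\<forall>x\<in>S2. H(0,x) = f x) \<and> (\<forall>x\<in>S2. H(1,x) = g x) \<and> (\<forall>t\<in>{0..1::real}. \<forall>x\<in>S2. H(t, antip x) = H(t,x))"
    using assms by blast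
  then show ?thesis by (subst Ev_iff)
qed

lemma cont_snd_comp': "continuous_on S2 f \<Longrightarrow> continuous_on ({0..1::real} \<times> S2) (\<lambda>z. f (snd z))"
  by (rule continuous_on_compose2[OF _ continuous_on_snd]) auto

lemma seg_htp:
  fixes u w :: "real^3 \<Rightarrow> complex \<times> complex"
  assumes uc: "continuous_on S2 u" and wc: "continuous_on S2 w"
    and ue: "\<And>x. x \<in> S2 \<Longrightarrow> u (antip x) = u x" and we: "\<And>x. x \<in> S2 \<Longrightarrow> w (antip x) = w x"
    and un: "\<And>x. x \<in> S2 \<Longrightarrow> norm (u x) = 1" and wn: "\<And>x. x \<in> S2 \<Longrightarrow> norm (w x) = 1"
    and nz: "\<And>x t. x \<in> S2 \<Longrightarrow> 0 \<le> t \<Longrightarrow> t \<le> 1 \<Longrightarrow> (1 - t) *\<^sub>R u x + t *\<^sub>R w x \<noteq> 0"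
  shows "homotopic_with_canon Ev S2 (sphere 0 1) u w"
proof -
  define v where "v z = (1 - fst z) *\<^sub>R u (snd z) + fst z *\<^sub>R w (snd z)" for z :: "real \<times> (real^3)"
  define H where "H z = inverse (norm (v z)) *\<^sub>R v z" for z
  have vnz: "v z \<noteq> 0" if "z \<in> {0..1} \<times> S2" for z
    using that nz by (auto simp: v_def)
  have vc: "continuous_on ({0..1::real} \<times> S2) v"
    unfolding v_def by (intro continuous_intros cont_snd_comp' uc wc)
  show ?thesis
  proof (rule Ev_I[of H])
    show "continuous_on ({0..1::real} \<times> S2) H"
      unfolding H_def using vnz by (intro continuous_intros vc) auto
    show "H ` ({0..1::real} \<times> S2) \<subseteq> sphere 0 1"
      using vnz by (auto simp: H_def image_subset_iff)
    show "\<forall>x\<in>S2. H (0, x) = u x" using un by (simp add: H_def v_def)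
    show "\<forall>x\<in>S2. H (1, x) = w x" using wn by (simp add: H_def v_def)
    show "\<forall>t\<in>{0..1::real}. \<forall>x\<in>S2. H (t, antip x) = H (t, x)"
      using ue we by (simp add: H_def v_def)
  qed
qed

lemma EVEN:
  fixes p :: "real^3 \<Rightarrow> complex \<times> complex"
  assumes pc: "continuous_on S2 p" and pS0: "p ` S2 \<subseteq> sphere 0 1" and pe: "\<And>x. x \<in> S2 \<Longrightarrow> p (antip x) = p x"
  obtains P where "continuous_on ({0..1::real} \<times> S2) P" "P ` ({0..1::real} \<times> S2) \<subseteq> sphere 0 1"
     "\<forall>x\<in>S2. P(0,x) = p x" "\<forall>x\<in>S2. P(1,x) = (1,0)" "\<forall>t\<in>{0..1::real}. \<forall>x\<in>S2. P(t, antip x) = P(t,x)"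
proof -
  have pS: "norm (p x) = 1" if "x \<in> S2" for x using pS0 that by auto
  have cS2: "compact S2" by (simp add: S2_def)
  obtain r where r: "polynomial_function r" "\<forall>x\<in>S2. norm (p x - r x) < 1/2"
    using Stone_Weierstrass_polynomial_function[OF cS2 pc, of "1/2"] by auto
  define q where "q x = (1/2) *\<^sub>R (r x + r (antip x))" for x
  have "polynomial_function (r \<circ> (\<lambda>x. - x))"
    by (rule polynomial_function_compose[OF polynomial_function_minus[OF polynomial_function_id] r(1)])
  then have qpoly: "polynomial_function q"
    unfolding q_def antip_def o_def using r(1) by (intro polynomial_function_cmul polynomial_function_add)
  have pq: "norm (p x - q x) < 1/2" if x: "x \<in> S2" for x
  proof -
    have p2: "p x = (1/2) *\<^sub>R (p x + p (antip x))"
      by (simp only: pe[OF x] scaleR_2[symmetric] scaleR_scaleR) simp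
    have "p x - q x = (1/2) *\<^sub>R ((p x - r x) + (p (antip x) - r (antip x)))"
      by (subst p2) (simp add: q_def algebra_simps)
    then have "norm (p x - q x) \<le> (1/2) * (norm (p x - r x) + norm (p (antip x) - r (antip x)))"
      by (simp add: norm_triangle_ineq)
    also have "\<dots> < 1/2"
    proof -
      have "norm (p x - r x) < 1/2" "norm (p (antip x) - r (antip x)) < 1/2"
        using r(2) x antip_S2[OF x] by auto
      then show ?thesis by (simp add: field_simps)
    qed
    finally show ?thesis .
  qed
  have qn: "norm (q x) > 1/2" if x: "x \<in> S2" for x
    using pq[OF x] pS[OF x] norm_triangle_ineq3[of "p x" "q x"] by linarith
  define nq where "nq x = inverse (norm (q x)) *\<^sub>R q x" for x
  have nqS: "norm (nq x) = 1" if "x \<in> S2" for x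
  proof -
    have "norm (q x) \<noteq> 0" using qn[OF that] by auto
    then show ?thesis by (simp add: nq_def)
  qed
  have qe: "q (antip x) = q x" for x by (simp add: q_def add.commute)
  have nqe: "nq (antip x) = nq x" for x by (simp add: nq_def qe)
  have nqdiff: "nq differentiable_on S2"
  proof (rule differentiable_at_imp_differentiable_on)
    fix x assume x: "x \<in> S2"
    have qd: "q differentiable (at x)" by (rule differentiable_at_polynomial_function[OF qpoly])
    have "q x \<noteq> 0" using qn[OF x] by auto
    then have nd: "(\<lambda>y. norm (q y)) differentiable (at x)"
      by (intro differentiable_compose[where f=norm and g=q, OF differentiable_norm_at qd])
    have "(\<lambda>y. inverse (norm (q y))) differentiable (at x)"
      by (rule differentiable_inverse[OF nd]) (use \<open>q x \<noteq> 0\<close> in simp)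
    then show "nq differentiable (at x)"
      unfolding nq_def using qd by (rule differentiable_scaleR)
  qed
  have nqc: "continuous_on S2 nq" by (rule differentiable_imp_continuous_on[OF nqdiff])
  have pnq: "norm (p x - nq x) < 1" if x: "x \<in> S2" for x
  proof -
    have "q x - nq x = (1 - inverse (norm (q x))) *\<^sub>R q x" by (simp add: nq_def algebra_simps)
    then have "norm (q x - nq x) = \<bar>1 - inverse (norm (q x))\<bar> * norm (q x)" by simp
    also have "\<dots> = \<bar>(1 - inverse (norm (q x))) * norm (q x)\<bar>" by (simp add: abs_mult)
    also have "\<dots> = \<bar>norm (q x) - 1\<bar>"
    proof -
      have a0: "norm (q x) \<noteq> 0" using qn[OF x] by auto
      have "(1 - inverse (norm (q x))) * norm (q x) = norm (q x) - 1"
        using a0 by (simp add: left_diff_distrib)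
      then show ?thesis by simp
    qed
    also have "\<dots> = \<bar>norm (q x) - norm (p x)\<bar>" using pS[OF x] by simp
    also have "\<dots> \<le> norm (p x - q x)" by (metis norm_minus_commute norm_triangle_ineq3)
    finally have "norm (q x - nq x) < 1/2" using pq[OF x] by simp
    then show ?thesis using pq[OF x] norm_triangle_ineq[of "p x - q x" "q x - nq x"] by simp
  qed
  have "nq ` S2 \<subseteq> sphere 0 1" using nqS by (auto simp: image_subset_iff)
  then obtain c where c: "c \<in> sphere 0 1" "c \<notin> nq ` S2"
    using notsurj[OF nqdiff] by blast
  have h1: "homotopic_with_canon Ev S2 (sphere 0 1) p nq"
  proof (rule seg_htp[OF pc nqc pe _ pS nqS])
    show "nq (antip x) = nq x" for x by (rule nqe)
    fix x and t :: real assume x: "x \<in> S2" and t: "0 \<le> t" "t \<le> 1"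
    have e: "(1 - t) *\<^sub>R p x + t *\<^sub>R nq x = p x + t *\<^sub>R (nq x - p x)" by (simp add: algebra_simps)
    have "norm (t *\<^sub>R (nq x - p x)) < 1"
      using pnq[OF x] t by (simp add: norm_minus_commute) (smt (verit) mult_left_le_one_le norm_ge_zero)
    then show "(1 - t) *\<^sub>R p x + t *\<^sub>R nq x \<noteq> 0"
      unfolding e using pS[OF x] by (metis add.commute add_diff_cancel_right' diff_0 norm_minus_cancel order_less_irrefl)
  qed
  have h2: "homotopic_with_canon Ev S2 (sphere 0 1) nq (\<lambda>x. - c)"
  proof (rule seg_htp[OF nqc _ nqe _ nqS])
    show "continuous_on S2 (\<lambda>x. - c)" by simp
    show "norm (- c) = 1" using c by simp
    fix x and t :: real assume x: "x \<in> S2" and t: "0 \<le> t" "t \<le> 1"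
    show "(1 - t) *\<^sub>R nq x + t *\<^sub>R - c \<noteq> 0"
    proof
      assume "(1 - t) *\<^sub>R nq x + t *\<^sub>R - c = 0"
      then have e: "(1 - t) *\<^sub>R nq x = t *\<^sub>R c" by (simp add: algebra_simps)
      then have "norm ((1 - t) *\<^sub>R nq x) = norm (t *\<^sub>R c)" by simp
      then have "1 - t = t" using t nqS[OF x] c by simp
      then have t2: "t = 1/2" by linarith
      have "(1/2::real) *\<^sub>R nq x = (1/2::real) *\<^sub>R c" using e unfolding t2 by (simp add: field_simps)
      then have "nq x = c" by (metis scaleR_cancel_left zero_neq_numeral divide_eq_0_iff one_neq_zero)
      then show False using c x by blast
    qed
  qed simp
  obtain \<gamma> where g: "path \<gamma>" "path_image \<gamma> \<subseteq> sphere 0 1" "pathstart \<gamma> = - c" "pathfinish \<gamma> = (1,0)"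
  proof -
    have pcs: "path_connected (sphere (0::complex \<times> complex) 1)" by (rule path_connected_sphere) simp
    have "- c \<in> sphere 0 1" "(1::complex, 0::complex) \<in> sphere 0 1" using c by auto
    then show ?thesis using pcs that unfolding path_connected_def by blast
  qed
  have h3: "homotopic_with_canon Ev S2 (sphere 0 1) (\<lambda>x. - c) (\<lambda>x. (1,0))"
  proof (rule Ev_I[of "\<lambda>z. \<gamma> (fst z)"])
    show "continuous_on ({0..1::real} \<times> S2) (\<lambda>z. \<gamma> (fst z))"
      using g(1) unfolding path_def by (rule continuous_on_compose2[OF _ continuous_on_fst]) auto
    show "(\<lambda>z. \<gamma> (fst z)) ` ({0..1::real} \<times> S2) \<subseteq> sphere 0 1"
      using g(2) by (auto simp: path_image_def)
    show "\<forall>x\<in>S2. \<gamma> (fst (0::real, x)) = - c" using g(3) by (simp add: pathstart_def)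
    show "\<forall>x\<in>S2. \<gamma> (fst (1::real, x)) = (1,0)" using g(4) by (simp add: pathfinish_def)
  qed simp
  have "homotopic_with_canon Ev S2 (sphere 0 1) p (\<lambda>x. (1,0))"
    by (rule homotopic_with_trans[OF homotopic_with_trans[OF h1 h2] h3])
  then have "\<exists>H. continuous_on ({0..1::real} \<times> S2) H \<and> H ` ({0..1::real} \<times> S2) \<subseteq> sphere 0 1
     \<and> (\<forall>x\<in>S2. H(0,x) = p x) \<and> (\<forall>x\<in>S2. H(1,x) = (1,0)) \<and> (\<forall>t\<in>{0..1::real}. \<forall>x\<in>S2. H(t, antip x) = H(t,x))"
    by (subst (asm) Ev_iff)
  then show ?thesis using that by blast
qed



definition mk :: "complex \<Rightarrow> complex \<Rightarrow> complex \<Rightarrow> complex \<Rightarrow> complex^2^2" where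
 "mk a b c d = (\<chi> i j. if i = 1 then (if j = 1 then a else b) else (if j = 1 then c else d))"

lemma mk_nth[simp]: "mk a b c d $1$1 = a" "mk a b c d $1$2 = b" "mk a b c d $2$1 = c" "mk a b c d $2$2 = d"
  by (simp_all add: mk_def)

lemma mat_eq2: "(A::'a^2^2) = B \<longleftrightarrow> A$1$1=B$1$1 \<and> A$1$2=B$1$2 \<and> A$2$1=B$2$1 \<and> A$2$2=B$2$2"
  by (auto simp add: vec_eq_iff forall_2)

lemma mk_eq_iff: "mk a b c d = mk a' b' c' d' \<longleftrightarrow> a = a' \<and> b = b' \<and> c = c' \<and> d = d'"
  by (simp add: mat_eq2)

lemma mk_eta: "(A::complex^2^2) = mk (A$1$1) (A$1$2) (A$2$1) (A$2$2)"
  by (simp add: mat_eq2)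

lemma mk_cases: obtains a b c d where "A = mk a b c d"
  using mk_eta by blast

lemma mult_nth: "((A::'a::semiring_1^2^2) ** B)$i$j = A$i$1*B$1$j + A$i$2*B$2$j"
  by (simp add: matrix_matrix_mult_def sum_2)

lemma mult_mk: "mk a b c d ** mk a' b' c' d' = mk (a*a'+b*c') (a*b'+b*d') (c*a'+d*c') (c*b'+d*d')"
  by (simp add: mat_eq2 mult_nth)

lemma mconj_mk: "mconj (mk a b c d) = mk (cnj a) (cnj b) (cnj c) (cnj d)"
  by (simp add: mat_eq2 mconj_def)

lemma adj_mk: "adj (mk a b c d) = mk (cnj a) (cnj c) (cnj b) (cnj d)"
  by (simp add: mat_eq2 adj_def mconj_def transpose_def)

lemma Qm_mk: "Qm = mk 0 (-1) 1 0"
  by (simp add: mat_eq2 Qm_def)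

lemma one_mk: "mat 1 = mk 1 0 0 1"
  by (simp add: mat_eq2 mat_def)

lemma mu_mk: "mu (mk a b c d) = mk (cnj d) (- cnj c) (- cnj b) (cnj a)"
  by (simp add: mu_def Qm_mk mconj_mk mult_mk mat_eq2)

lemma det_mk: "det (mk a b c d) = a*d - b*c"
  by (simp add: det_2)

lemma U2_mk: "mk a b c d \<in> U2 \<longleftrightarrow> a*cnj a + b*cnj b = 1 \<and> a*cnj c + b*cnj d = 0 \<and> c*cnj a + d*cnj b = 0 \<and> c*cnj c + d * cnj d = 1
   \<and> cnj a * a + cnj c * c = 1 \<and> cnj a * b + cnj c * d = 0 \<and> cnj b * a + cnj d * c = 0 \<and> cnj b * b + cnj d * d = 1"
  by (simp add: U2_def adj_mk mult_mk one_mk mat_eq2 conj_ac)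

lemma cont_mat:
  assumes "\<And>i j. continuous_on S (\<lambda>x. f x $ i $ j)"
  shows "continuous_on S (f :: _ \<Rightarrow> 'a::real_normed_vector^'n^'m)"
proof -
  have "continuous_on S (\<lambda>x. \<chi> i. \<chi> j. f x $ i $ j)"
    by (intro continuous_on_vec_lambda assms)
  then show ?thesis by simp
qed

lemma cont_mk[continuous_intros]:
  assumes "continuous_on S a" "continuous_on S b" "continuous_on S c" "continuous_on S d"
  shows "continuous_on S (\<lambda>x. mk (a x) (b x) (c x) (d x))"
  apply (rule cont_mat)
  subgoal for i j using assms exhaust_2[of i] exhaust_2[of j] by auto
  done

lemma cont_nth[continuous_intros]: "continuous_on S f \<Longrightarrow> continuous_on S (\<lambda>x. f x $ i $ j)"
  by (intro continuous_intros)

lemma fun_mk: "f x = mk (f x $1$1) (f x $1$2) (f x $2$1) (f x $2$2)"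
  by (rule mk_eta)

lemma cont_det[continuous_intros]: "continuous_on S (f :: _ \<Rightarrow> complex^2^2) \<Longrightarrow> continuous_on S (\<lambda>x. det (f x))"
  unfolding det_2 by (intro continuous_intros)

lemma cont_mult[continuous_intros]: "continuous_on S (f :: _ \<Rightarrow> complex^2^2) \<Longrightarrow> continuous_on S g \<Longrightarrow> continuous_on S (\<lambda>x. f x ** g x)"
  by (rule cont_mat) (simp add: mult_nth, intro continuous_intros)

lemma cont_adj[continuous_intros]: "continuous_on S (f :: _ \<Rightarrow> complex^2^2) \<Longrightarrow> continuous_on S (\<lambda>x. adj (f x))"
  by (rule cont_mat) (simp add: adj_def mconj_def transpose_def, intro continuous_intros)

lemma mu_mult: "mu (A ** B) = mu A ** mu B"
  by (cases A rule: mk_cases; cases B rule: mk_cases) (simp add: mult_mk mu_mk mk_eq_iff algebra_simps)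

lemma det_mu: "det (mu A) = cnj (det A)"
  by (cases A rule: mk_cases) (simp add: mu_mk det_mk)

lemma det_adj: "det (adj A) = cnj (det A)"
  by (cases A rule: mk_cases) (simp add: adj_mk det_mk)

lemma mu_adj: "mu (adj A) = adj (mu A)"
  by (cases A rule: mk_cases) (simp add: adj_mk mu_mk)

lemma adj_mult: "adj (A ** B) = adj B ** adj A"
  by (cases A rule: mk_cases; cases B rule: mk_cases) (simp add: mult_mk adj_mk mk_eq_iff algebra_simps)

lemma adj_adj[simp]: "adj (adj A) = A"
  by (cases A rule: mk_cases) (simp add: adj_mk)

lemma adj_one[simp]: "adj (mat 1) = mat 1"
  by (simp add: one_mk adj_mk)

lemma U2_mult: "A \<in> U2 \<Longrightarrow> B \<in> U2 \<Longrightarrow> A ** B \<in> U2"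
  unfolding U2_def
  by (simp add: adj_mult matrix_mul_assoc) (metis matrix_mul_assoc matrix_mul_rid)

lemma U2_adj: "A \<in> U2 \<Longrightarrow> adj A \<in> U2"
  unfolding U2_def by simp

lemma U2_inv: "A \<in> U2 \<Longrightarrow> adj A ** A = mat 1" "A \<in> U2 \<Longrightarrow> A ** adj A = mat 1"
  unfolding U2_def by simp_all

lemma det_one: "det (mat 1 :: complex^2^2) = 1"
  by (simp add: one_mk det_mk)

lemma det_U2: assumes "A \<in> U2" shows "det A \<in> U1"
proof -
  have "det A * cnj (det A) = 1"
    using arg_cong[where f=det, OF U2_inv(2)[OF assms]] by (simp add: det_mul det_adj det_one)
  then have "complex_of_real ((cmod (det A))\<^sup>2) = 1" using complex_norm_square[of "det A"] by simp
  then have "(cmod (det A))\<^sup>2 = 1" by (metis of_real_eq_1_iff)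
  then show ?thesis using norm_ge_zero[of "det A"] by (auto simp add: U1_def power2_eq_1_iff)
qed

lemma mu_one: "mu (mat 1) = mat 1"
  by (simp add: one_mk mu_mk)

lemma one_U2: "mat 1 \<in> U2"
  by (simp add: U2_def)

lemma SU2_form: assumes "A \<in> U2" "det A = 1"
  shows "A = mk (A$1$1) (A$1$2) (- cnj (A$1$2)) (cnj (A$1$1))"
proof -
  obtain a b c d where A: "A = mk a b c d" by (rule mk_cases)
  have e: "a*cnj a + b*cnj b = 1" "cnj a * c + cnj b * d = 0" "a*d - b*c = 1"
    using assms unfolding A U2_mk det_mk by (auto simp: complex_cnj_cancel_iff)
      (metis complex_cnj_add complex_cnj_cnj complex_cnj_mult complex_cnj_zero mult.commute)
  have "c = c * (a*cnj a + b*cnj b)" using e by simp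
  also have "\<dots> = - cnj b * (a*d - b*c) + a * (cnj a * c + cnj b * d)" by (simp add: algebra_simps)
  also have "\<dots> = - cnj b" using e by simp
  finally have c: "c = - cnj b" .
  have "d = d * (a*cnj a + b*cnj b)" using e by simp
  also have "\<dots> = cnj a * (a*d - b*c) + b * (cnj a * c + cnj b * d)" by (simp add: algebra_simps)
  also have "\<dots> = cnj a" using e by simp
  finally have d: "d = cnj a" .
  show ?thesis using A c d by simp
qed

lemma mu_SU2: "A \<in> U2 \<Longrightarrow> det A = 1 \<Longrightarrow> mu A = A"
  by (subst (1 2) SU2_form, assumption+) (simp add: mu_mk)

definition qm :: "complex \<times> complex \<Rightarrow> complex^2^2" where
  "qm p = mk (fst p) (snd p) (- cnj (snd p)) (cnj (fst p))"

lemma qm_U2: "norm p = 1 \<Longrightarrow> qm p \<in> U2"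
proof -
  assume n: "norm p = 1"
  obtain a b where p: "p = (a,b)" by fastforce
  have "(cmod a)\<^sup>2 + (cmod b)\<^sup>2 = 1" using n by (simp add: p norm_Pair)
  then have "a * cnj a + b * cnj b = 1"
    by (metis complex_norm_square of_real_1 of_real_add)
  then show ?thesis unfolding qm_def p U2_mk by (simp add: algebra_simps)
qed

lemma mu_qm: "mu (qm p) = qm p"
  by (simp add: qm_def mu_mk)

lemma cont_qm: "continuous_on S qm"
  unfolding qm_def by (intro continuous_intros)

definition sc :: "complex \<Rightarrow> complex^2^2 \<Rightarrow> complex^2^2" where
  "sc c A = mk c 0 0 c ** A"

lemma mu_sc: "mu (sc c A) = sc (cnj c) (mu A)"
  by (simp add: sc_def mu_mult mu_mk)

lemma det_sc: "det (sc c A) = c^2 * det A"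
  by (simp add: sc_def det_mul det_mk power2_eq_square)

lemma sc_U2: "cmod c = 1 \<Longrightarrow> A \<in> U2 \<Longrightarrow> sc c A \<in> U2"
  unfolding sc_def
proof (rule U2_mult)
  assume "cmod c = 1"
  then have "c * cnj c = 1" by (metis complex_norm_square mult.right_neutral of_real_1 power_one)
  then show "mk c 0 0 c \<in> U2" unfolding U2_mk by (simp add: mult.commute)
qed

lemma cont_sc[continuous_intros]: "continuous_on S c \<Longrightarrow> continuous_on S f \<Longrightarrow> continuous_on S (\<lambda>x. sc (c x) (f x))"
  unfolding sc_def by (intro continuous_intros)



lemma eq_htpc_trans: "eq_htpc A a B b f g \<Longrightarrow> eq_htpc A a B b g h \<Longrightarrow> eq_htpc A a B b f h"
  unfolding eq_htpc_def by (rule homotopic_with_trans)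

lemma eq_htpc_sym: "eq_htpc A a B b f g \<Longrightarrow> eq_htpc A a B b g f"
  unfolding eq_htpc_def by (rule homotopic_with_symD)

lemma eq_htpc_E:
  assumes "eq_htpc S2 antip B b f g"
  obtains H where "continuous_on ({0..1::real} \<times> S2) H" "H ` ({0..1::real} \<times> S2) \<subseteq> B"
     "\<forall>x\<in>S2. H(0,x) = f x" "\<forall>x\<in>S2. H(1,x) = g x" "\<forall>t\<in>{0..1::real}. \<forall>x\<in>S2. H(t, antip x) = b (H(t,x))"
proof -
  have "\<exists>H. continuous_on ({0..1::real} \<times> S2) H \<and> H ` ({0..1::real} \<times> S2) \<subseteq> B
     \<and> (\<forall>x\<in>S2. H(0,x) = f x) \<and> (\<forall>x\<in>S2. H(1,x) = g x) \<and> (\<forall>t\<in>{0..1::real}. \<forall>x\<in>S2. H(t, antip x) = b (H(t,x)))"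
    using assms by (subst (asm) eq_htpc_iff')
  then show ?thesis using that by blast
qed

lemma eq_htpc_I:
  assumes "continuous_on ({0..1::real} \<times> S2) H" "H ` ({0..1::real} \<times> S2) \<subseteq> B"
     "\<forall>x\<in>S2. H(0,x) = f x" "\<forall>x\<in>S2. H(1,x) = g x" "\<forall>t\<in>{0..1::real}. \<forall>x\<in>S2. H(t, antip x) = b (H(t,x))"
  shows "eq_htpc S2 antip B b f g"
proof -
  have "\<exists>H. continuous_on ({0..1::real} \<times> S2) H \<and> H ` ({0..1::real} \<times> S2) \<subseteq> B
     \<and> (\<forall>x\<in>S2. H(0,x) = f x) \<and> (\<forall>x\<in>S2. H(1,x) = g x) \<and> (\<forall>t\<in>{0..1::real}. \<forall>x\<in>S2. H(t, antip x) = b (H(t,x)))"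
    using assms by blast
  then show ?thesis by (subst eq_htpc_iff')
qed

lemma EqMapsD: "f \<in> EqMaps A a B b \<Longrightarrow> continuous_on A f \<and> f ` A \<subseteq> B \<and> (\<forall>x\<in>A. f (a x) = b (f x))"
  by (simp add: EqMaps_def)

lemma P1: "f \<in> EqMaps S2 antip U2 mu \<Longrightarrow> (\<lambda>k. det (f k)) \<in> EqMaps S2 antip U1 cnj"
  unfolding EqMaps_def using det_U2 det_mu by (auto intro!: continuous_intros)

lemma P2:
  assumes "eq_htpc S2 antip U2 mu f g"
  shows "eq_htpc S2 antip U1 cnj (\<lambda>k. det (f k)) (\<lambda>k. det (g k))"
proof -
  obtain H where H: "continuous_on ({0..1::real} \<times> S2) H" "H ` ({0..1::real} \<times> S2) \<subseteq> U2"
     "\<forall>x\<in>S2. H(0,x) = f x" "\<forall>x\<in>S2. H(1,x) = g x" "\<forall>t\<in>{0..1::real}. \<forall>x\<in>S2. H(t, antip x) = mu (H(t,x))"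
    using assms by (rule eq_htpc_E)
  show ?thesis
    apply (rule eq_htpc_I[of "\<lambda>z. det (H z)"])
    using H det_U2 det_mu by (auto intro!: continuous_intros det_U2 simp: image_subset_iff)
qed

lemma P3:
  assumes "f \<in> EqMaps S2 antip U2 mu" "g \<in> EqMaps S2 antip U2 mu"
  shows "(\<lambda>k. f k ** g k) \<in> EqMaps S2 antip U2 mu \<and> (\<forall>k. det (f k ** g k) = det (f k) * det (g k))"
  using assms unfolding EqMaps_def by (auto intro!: continuous_intros U2_mult simp: mu_mult det_mul)

lemma P67: "(\<lambda>k. 1) \<in> EqMaps S2 antip U1 cnj" "(\<lambda>k. -1) \<in> EqMaps S2 antip U1 cnj"
  unfolding EqMaps_def U1_def by auto

definition pauli :: "real^3 \<Rightarrow> complex^2^2" where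
  "pauli k = mk (of_real (k$3)) (of_real (k$1) - \<i> * of_real (k$2)) (of_real (k$1) + \<i> * of_real (k$2)) (- of_real (k$3))"

lemma S2_sq: "k \<in> S2 \<Longrightarrow> (k$1)^2 + (k$2)^2 + (k$3)^2 = 1"
proof -
  assume "k \<in> S2"
  then have "norm k = 1" by (simp add: S2_def)
  then have "k \<bullet> k = 1" by (metis norm_eq_1 power2_norm_eq_inner)
  then show ?thesis by (simp add: inner_vec_def sum_3 power2_eq_square)
qed

lemma pauli_E: "pauli \<in> EqMaps S2 antip U2 mu"
proof -
  have "continuous_on S2 pauli" unfolding pauli_def by (intro continuous_intros)
  moreover have "pauli k \<in> U2" if "k \<in> S2" for k
  proof -
    have r: "(k$1)^2 + (k$2)^2 + (k$3)^2 = 1" using S2_sq[OF that] .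
    have "complex_of_real ((k$1)^2 + (k$2)^2 + (k$3)^2) = 1" using r by simp
    then have c: "of_real (k$1) * of_real (k$1) + of_real (k$2) * of_real (k$2) + of_real (k$3) * of_real (k$3) = (1::complex)"
      by (simp add: power2_eq_square)
    show ?thesis unfolding pauli_def U2_mk using c
      by (simp add: algebra_simps)
  qed
  moreover have "pauli (antip k) = mu (pauli k)" for k
    by (simp add: pauli_def antip_def mu_mk)
  ultimately show ?thesis unfolding EqMaps_def by auto
qed

lemma det_pauli: "k \<in> S2 \<Longrightarrow> det (pauli k) = -1"
proof -
  assume "k \<in> S2"
  then have r: "(k$1)^2 + (k$2)^2 + (k$3)^2 = 1" by (rule S2_sq)
  have "complex_of_real ((k$1)^2 + (k$2)^2 + (k$3)^2) = 1" using r by simp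
  then have c: "of_real (k$1) * of_real (k$1) + of_real (k$2) * of_real (k$2) + of_real (k$3) * of_real (k$3) = (1::complex)"
    by (simp add: power2_eq_square)
  show ?thesis unfolding pauli_def det_mk using c
    by (simp add: algebra_simps)
qed

lemma const_one_E: "(\<lambda>k. mat 1) \<in> EqMaps S2 antip U2 mu"
  unfolding EqMaps_def by (auto simp add: one_U2 mu_one)

lemma eq_htpc_cong2: "eq_htpc S2 antip B b f g \<Longrightarrow> (\<And>x. x \<in> S2 \<Longrightarrow> g x = g' x) \<Longrightarrow> eq_htpc S2 antip B b f g'"
proof -
  assume a: "eq_htpc S2 antip B b f g" "\<And>x. x \<in> S2 \<Longrightarrow> g x = g' x"
  obtain H where H: "continuous_on ({0..1::real} \<times> S2) H" "H ` ({0..1::real} \<times> S2) \<subseteq> B"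
     "\<forall>x\<in>S2. H(0,x) = f x" "\<forall>x\<in>S2. H(1,x) = g x" "\<forall>t\<in>{0..1::real}. \<forall>x\<in>S2. H(t, antip x) = b (H(t,x))"
    using a(1) by (rule eq_htpc_E)
  show ?thesis by (rule eq_htpc_I[OF H(1,2,3) _ H(5)]) (use H(4) a(2) in auto)
qed

lemma P5: "h \<in> EqMaps S2 antip U1 cnj \<Longrightarrow> \<exists>f\<in>EqMaps S2 antip U2 mu. eq_htpc S2 antip U1 cnj h (\<lambda>k. det (f k))"
proof -
  assume h: "h \<in> EqMaps S2 antip U1 cnj"
  show ?thesis
  proof (cases "eq_htpc S2 antip U1 cnj h (\<lambda>k. 1)")
    case True
    then show ?thesis using const_one_E by (intro bexI[of _ "\<lambda>k. mat 1"]) (simp_all add: det_one)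
  next
    case False
    then have "eq_htpc S2 antip U1 cnj h (\<lambda>k. -1)" using P8[OF h] by blast
    then have "eq_htpc S2 antip U1 cnj h (\<lambda>k. det (pauli k))"
      by (rule eq_htpc_cong2) (simp add: det_pauli)
    then show ?thesis using pauli_E by blast
  qed
qed

lemma cont_snd_comp: "continuous_on S2 f \<Longrightarrow> continuous_on ({0..1::real} \<times> S2) (\<lambda>z. f (snd z))"
  by (rule continuous_on_compose2[OF _ continuous_on_snd]) auto

lemma sc_one: "sc 1 A = A"
  by (simp add: sc_def one_mk[symmetric])

lemma keyC:
  assumes F: "F \<in> EqMaps S2 antip U2 mu" and hd: "eq_htpc S2 antip U1 cnj (\<lambda>k. det (F k)) (\<lambda>k. 1)"
  shows "eq_htpc S2 antip U2 mu F (\<lambda>k. mat 1)"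
proof -
  have Fc: "continuous_on S2 F" and FU: "\<And>k. k \<in> S2 \<Longrightarrow> F k \<in> U2"
    and Fe: "\<And>k. k \<in> S2 \<Longrightarrow> F (antip k) = mu (F k)"
    using F by (auto simp: EqMaps_def)
  obtain \<theta> and n :: int where th: "continuous_on S2 \<theta>" "\<And>x. x \<in> S2 \<Longrightarrow> det (F x) = exp(\<i> * of_real (\<theta> x))"
    "\<And>x. x \<in> S2 \<Longrightarrow> \<theta> (antip x) + \<theta> x = 2 * pi * n"
    using E1_sum[OF P1[OF F]] by blast
  have htpn: "eq_htpc S2 antip U1 cnj (\<lambda>k. det (F k)) (\<lambda>k. exp(\<i> * of_real (pi * n)))"
    by (rule E1_htp_n[OF th])
  have ev: "even n"
  proof (rule ccontr)
    assume "odd n"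
    then have "eq_htpc S2 antip U1 cnj (\<lambda>k. det (F k)) (\<lambda>k. -1)" using htpn unfolding exp_pi_int by simp
    then have "eq_htpc S2 antip U1 cnj (\<lambda>k. 1) (\<lambda>k. -1)"
      by (rule eq_htpc_trans[OF eq_htpc_sym[OF hd]])
    then show False using P9 by blast
  qed
  define \<phi> where "\<phi> k = \<theta> k - pi * n" for k
  have phi_odd: "\<phi> (antip k) = - \<phi> k" if "k \<in> S2" for k
    using th(3)[OF that] by (simp add: \<phi>_def algebra_simps)
  have detF: "det (F k) = exp(\<i> * of_real (\<phi> k))" if "k \<in> S2" for k
  proof -
    have "exp(\<i> * of_real (\<phi> k)) = exp(\<i> * of_real (\<theta> k)) / exp(\<i> * of_real (pi * n))"
      by (simp add: \<phi>_def exp_diff[symmetric] algebra_simps)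
    also have "\<dots> = exp(\<i> * of_real (\<theta> k))" using ev unfolding exp_pi_int by simp
    finally show ?thesis using th(2)[OF that] by simp
  qed
  have phic: "continuous_on S2 \<phi>" unfolding \<phi>_def by (intro continuous_intros th(1))
  define K1 where "K1 z = sc (exp(\<i> * of_real (- (fst z * \<phi> (snd z)) / 2))) (F (snd z))" for z
  define G where "G k = sc (exp(\<i> * of_real (- \<phi> k / 2))) (F k)" for k
  have GU: "G k \<in> U2" if "k \<in> S2" for k
    unfolding G_def by (rule sc_U2[OF _ FU[OF that]]) simp
  have Gdet: "det (G k) = 1" if "k \<in> S2" for k
  proof -
    have "det (G k) = exp(\<i> * of_real (- \<phi> k / 2)) * exp(\<i> * of_real (- \<phi> k / 2)) * exp(\<i> * of_real (\<phi> k))"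
      unfolding G_def det_sc detF[OF that] by (simp add: power2_eq_square)
    also have "\<dots> = exp(\<i> * of_real (- \<phi> k / 2) + \<i> * of_real (- \<phi> k / 2) + \<i> * of_real (\<phi> k))"
      by (simp only: exp_add)
    also have "\<dots> = exp 0" by (rule arg_cong[where f=exp]) (simp add: algebra_simps)
    also have "\<dots> = 1" by simp
    finally show ?thesis .
  qed
  have K1eq: "K1 (t, antip k) = mu (K1 (t,k))" if "k \<in> S2" for t k
  proof -
    have "cnj (exp(\<i> * of_real (- (t * \<phi> k) / 2))) = exp(\<i> * of_real (- (t * \<phi> (antip k)) / 2))"
      using phi_odd[OF that] by (simp add: exp_cnj)
    then show ?thesis unfolding K1_def using Fe[OF that] by (simp add: mu_sc)
  qed
  have h1: "eq_htpc S2 antip U2 mu F G"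
  proof (rule eq_htpc_I[of K1])
    show "continuous_on ({0..1::real} \<times> S2) K1" unfolding K1_def
      by (intro continuous_intros cont_snd_comp phic Fc) auto
    show "K1 ` ({0..1::real} \<times> S2) \<subseteq> U2" unfolding K1_def
      by (auto intro!: sc_U2 FU)
    show "\<forall>x\<in>S2. K1 (0, x) = F x" by (simp add: K1_def sc_one)
    show "\<forall>x\<in>S2. K1 (1, x) = G x" by (simp add: K1_def G_def)
    show "\<forall>t\<in>{0..1::real}. \<forall>x\<in>S2. K1 (t, antip x) = mu (K1 (t, x))" using K1eq by blast
  qed
  have Ge: "G (antip k) = G k" if "k \<in> S2" for k
  proof -
    have "G (antip k) = mu (G k)" using K1eq[OF that, of 1] by (simp add: K1_def G_def)
    then show ?thesis using mu_SU2[OF GU[OF that] Gdet[OF that]] by simp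
  qed
  define p where "p k = (G k $1$1, G k $1$2)" for k
  have Gc: "continuous_on S2 G" unfolding G_def by (intro continuous_intros phic Fc) auto
  have pc: "continuous_on S2 p" unfolding p_def by (intro continuous_intros Gc)
  have pq: "qm (p k) = G k" if "k \<in> S2" for k
    using SU2_form[OF GU[OF that] Gdet[OF that]] by (simp add: qm_def p_def)
  have pS: "p k \<in> sphere 0 1" if "k \<in> S2" for k
  proof -
    obtain a b c d where Gk: "G k = mk a b c d" by (rule mk_cases)
    have "a * cnj a + b * cnj b = 1" using GU[OF that] unfolding Gk U2_mk by blast
    then have "complex_of_real ((cmod a)\<^sup>2 + (cmod b)\<^sup>2) = 1"
      using complex_norm_square[of a] complex_norm_square[of b] by simp
    then have "(cmod a)\<^sup>2 + (cmod b)\<^sup>2 = 1" by (metis of_real_eq_1_iff)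
    then show ?thesis by (simp add: p_def Gk norm_Pair)
  qed
  have pe: "p (antip k) = p k" if "k \<in> S2" for k using Ge[OF that] by (simp add: p_def)
  obtain P where P: "continuous_on ({0..1::real} \<times> S2) P" "P ` ({0..1::real} \<times> S2) \<subseteq> sphere 0 1"
     "\<forall>x\<in>S2. P(0,x) = p x" "\<forall>x\<in>S2. P(1,x) = (1,0)" "\<forall>t\<in>{0..1::real}. \<forall>x\<in>S2. P(t, antip x) = P(t,x)"
    using EVEN[OF pc _ pe] pS by blast
  have h2: "eq_htpc S2 antip U2 mu G (\<lambda>k. mat 1)"
  proof (rule eq_htpc_I[of "\<lambda>z. qm (P z)"])
    show "continuous_on ({0..1::real} \<times> S2) (\<lambda>z. qm (P z))"
      by (rule continuous_on_compose2[OF cont_qm P(1)]) auto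
    show "(\<lambda>z. qm (P z)) ` ({0..1::real} \<times> S2) \<subseteq> U2"
      using P(2) by (auto intro!: qm_U2 simp: image_subset_iff)
    show "\<forall>x\<in>S2. qm (P (0, x)) = G x" using P(3) pq by simp
    show "\<forall>x\<in>S2. qm (P (1, x)) = mat 1" using P(4) by (simp add: qm_def one_mk)
    show "\<forall>t\<in>{0..1::real}. \<forall>x\<in>S2. qm (P (t, antip x)) = mu (qm (P (t, x)))"
      using P(5) by (simp add: mu_qm)
  qed
  show ?thesis by (rule eq_htpc_trans[OF h1 h2])
qed

lemma P4:
  assumes f: "f \<in> EqMaps S2 antip U2 mu" and g: "g \<in> EqMaps S2 antip U2 mu"
    and hd: "eq_htpc S2 antip U1 cnj (\<lambda>k. det (f k)) (\<lambda>k. det (g k))"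
  shows "eq_htpc S2 antip U2 mu f g"
proof -
  have fc: "continuous_on S2 f" and fU: "\<And>k. k \<in> S2 \<Longrightarrow> f k \<in> U2"
    and fe: "\<And>k. k \<in> S2 \<Longrightarrow> f (antip k) = mu (f k)"
    using f by (auto simp: EqMaps_def)
  have gc: "continuous_on S2 g" and gU: "\<And>k. k \<in> S2 \<Longrightarrow> g k \<in> U2"
    and ge: "\<And>k. k \<in> S2 \<Longrightarrow> g (antip k) = mu (g k)"
    using g by (auto simp: EqMaps_def)
  define F where "F k = f k ** adj (g k)" for k
  have FE: "F \<in> EqMaps S2 antip U2 mu"
    unfolding EqMaps_def F_def using fU gU fe ge
    by (auto intro!: continuous_intros fc gc U2_mult U2_adj simp: mu_mult mu_adj)
  have dg1: "det (g k) * cnj (det (g k)) = 1" if "k \<in> S2" for k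
  proof -
    have "cmod (det (g k)) = 1" using det_U2[OF gU[OF that]] by (simp add: U1_def)
    then show ?thesis using complex_norm_square[of "det (g k)"] by simp
  qed
  obtain H where H: "continuous_on ({0..1::real} \<times> S2) H" "H ` ({0..1::real} \<times> S2) \<subseteq> U1"
     "\<forall>x\<in>S2. H(0,x) = det (f x)" "\<forall>x\<in>S2. H(1,x) = det (g x)" "\<forall>t\<in>{0..1::real}. \<forall>x\<in>S2. H(t, antip x) = cnj (H(t,x))"
    using hd by (rule eq_htpc_E)
  have hF: "eq_htpc S2 antip U1 cnj (\<lambda>k. det (F k)) (\<lambda>k. 1)"
  proof (rule eq_htpc_I[of "\<lambda>z. H z * cnj (det (g (snd z)))"])
    show "continuous_on ({0..1::real} \<times> S2) (\<lambda>z. H z * cnj (det (g (snd z))))"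
      by (intro continuous_intros H(1) cont_snd_comp gc)
    show "(\<lambda>z. H z * cnj (det (g (snd z)))) ` ({0..1::real} \<times> S2) \<subseteq> U1"
      using H(2) det_U2[OF gU] by (auto simp: U1_def image_subset_iff norm_mult)
    show "\<forall>x\<in>S2. H (0, x) * cnj (det (g (snd (0::real, x)))) = det (F x)"
      using H(3) by (simp add: F_def det_mul det_adj)
    show "\<forall>x\<in>S2. H (1, x) * cnj (det (g (snd (1::real, x)))) = 1"
      using H(4) dg1 by simp
    show "\<forall>t\<in>{0..1::real}. \<forall>x\<in>S2. H (t, antip x) * cnj (det (g (snd (t, antip x)))) = cnj (H (t, x) * cnj (det (g (snd (t, x)))))"
      using H(5) ge by (simp add: det_mu)
  qed
  obtain K where K: "continuous_on ({0..1::real} \<times> S2) K" "K ` ({0..1::real} \<times> S2) \<subseteq> U2"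
     "\<forall>x\<in>S2. K(0,x) = F x" "\<forall>x\<in>S2. K(1,x) = mat 1" "\<forall>t\<in>{0..1::real}. \<forall>x\<in>S2. K(t, antip x) = mu (K(t,x))"
    using keyC[OF FE hF] by (rule eq_htpc_E)
  show ?thesis
  proof (rule eq_htpc_I[of "\<lambda>z. K z ** g (snd z)"])
    show "continuous_on ({0..1::real} \<times> S2) (\<lambda>z. K z ** g (snd z))"
      by (intro continuous_intros K(1) cont_snd_comp gc)
    show "(\<lambda>z. K z ** g (snd z)) ` ({0..1::real} \<times> S2) \<subseteq> U2"
      using K(2) gU by (auto intro!: U2_mult simp: image_subset_iff)
    show "\<forall>x\<in>S2. K (0, x) ** g (snd (0::real, x)) = f x"
      using K(3) gU by (simp add: F_def matrix_mul_assoc[symmetric] U2_inv)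
    show "\<forall>x\<in>S2. K (1, x) ** g (snd (1::real, x)) = g x"
      using K(4) by simp
    show "\<forall>t\<in>{0..1::real}. \<forall>x\<in>S2. K (t, antip x) ** g (snd (t, antip x)) = mu (K (t, x) ** g (snd (t, x)))"
      using K(5) ge by (simp add: mu_mult)
  qed
qed

theorem mainTheorem12:
  shows "(\<forall>f\<in>EqMaps S2 antip U2 mu. (\<lambda>k. det (f k)) \<in> EqMaps S2 antip U1 cnj) \<and>
    (\<forall>f\<in>EqMaps S2 antip U2 mu. \<forall>g\<in>EqMaps S2 antip U2 mu.
        eq_htpc S2 antip U2 mu f g \<longrightarrow>
        eq_htpc S2 antip U1 cnj (\<lambda>k. det (f k)) (\<lambda>k. det (g k))) \<and>
    (\<forall>f\<in>EqMaps S2 antip U2 mu. \<forall>g\<in>EqMaps S2 antip U2 mu.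
        (\<lambda>k. f k ** g k) \<in> EqMaps S2 antip U2 mu \<and>
        (\<forall>k. det (f k ** g k) = det (f k) * det (g k))) \<and>
    (\<forall>f\<in>EqMaps S2 antip U2 mu. \<forall>g\<in>EqMaps S2 antip U2 mu.
        eq_htpc S2 antip U1 cnj (\<lambda>k. det (f k)) (\<lambda>k. det (g k)) \<longrightarrow>
        eq_htpc S2 antip U2 mu f g) \<and>
    (\<forall>h\<in>EqMaps S2 antip U1 cnj. \<exists>f\<in>EqMaps S2 antip U2 mu.
        eq_htpc S2 antip U1 cnj h (\<lambda>k. det (f k))) \<and>
    (\<lambda>k. 1) \<in> EqMaps S2 antip U1 cnj \<and> (\<lambda>k. -1) \<in> EqMaps S2 antip U1 cnj \<and>
    (\<forall>h\<in>EqMaps S2 antip U1 cnj.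
        eq_htpc S2 antip U1 cnj h (\<lambda>k. 1) \<or> eq_htpc S2 antip U1 cnj h (\<lambda>k. -1)) \<and>
    \<not> eq_htpc S2 antip U1 cnj (\<lambda>k. 1) (\<lambda>k. -1)"
  using P1 P2 P3 P4 P5 P67 P8 P9 by blast

end
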